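(* Assume the setting described in the context and fix a compact interval $I\subset(0,\infty)$. Suppose Assumptions (A1) and (A2) hold. Then for every $x\in F$, \[\lim_{n\rightarrow\infty}\sup_{t\in I}\left|\beta(n)q^n_{\lfloor\gamma(n)t\rfloor}(g_n(x))-q_t(x)\right|=0.\]
   Context: Let $(E,d_E)$ be a metric space and $F\subseteq E$ such that $F\cap\overline{B}_E(x,r)$ is compact for all $x\in E$, $r>0$ ($\overline{B}_E$, $B_E$ closed and open balls in $E$). Let $d_F:=d_E|_{F\times F}$, $B_F(x,r)$ the open ball in $(F,d_F)$, $\rho\in F$, $\nu$ a Radon measure of full support on $(F,d_F)$ (extended to $E$ by $\nu(A):=\nu(A\cap F)$), and $(q_t(x))_{x\in F,t>0}$ jointly continuous in $(t,x)$ with $q_t\ge0$, $\int_Fq_t\,d\nu=1$ for each $t>0$. For a locally finite connected graph $G$ with at least two vertices and distinguished vertex $\rho(G)$: $d_G$ is the shortest-path metric, $B_G(x,r)$ the open $d_G$-ball; $\mu^G$ a symmetric weight with $\mu^G_{xy}>0$ iff $\{x,y\}\in E(G)$; $\mu^G_x:=\sum_y\mu^G_{xy}$; $\nu^G(A):=\sum_{x\in A}\mu^G_x$; $X^G$ the discrete time simple random walk with $P_G(x,y)=\mu^G_{xy}/\mu^G_x$ and law $\mathbf{P}^G_x$; $p^G_m(x,y):=\mathbf{P}^G_x(X^G_m=y)/\nu^G(\{y\})$, $q^G_m(x,y):=\frac12(p^G_m(x,y)+p^G_{m+1}(x,y))$, $q^G_m(x):=q^G_m(\rho(G),x)$. $(G^n)_{n\ge1}$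 are such graphs with $V(G^n)\subseteq E$, $\rho(G^n)=\rho$; write $\nu^n,X^n,q^n$ for $\nu^{G^n},X^{G^n},q^{G^n}$. $(\alpha(n)),(\beta(n)),(\gamma(n))$ are non-negative sequences diverging to $\infty$. For $x\in E$, $g_n(x)$ is a point of $V(G^n)$ minimising $d_E(x,\cdot)$ over $V(G^n)$. Assumption (A1): (a) there is $c_1>0$ with $d_{G^n}(x,y)\ge c_1\alpha(n)d_E(x,y)$ for all $x,y\in V(G^n)$, $n\ge1$; and a non-negative $\tilde\alpha(n)=o(\alpha(n))$ such that for each $r>0$ there exist $c_2<\infty$, $n_0$ with $d_{G^n}(x,y)\le c_2\alpha(n)d_E(x,y)+\tilde\alpha(n)$ for all $x,y\in V(G^n)\cap B_E(\rho,r)$, $n\ge n_0$. (b) For each $r>0$, $\lim_n\sup_{x\in B_F(\rho,r)}d_E(x,V(G^n))=0$. (c) For every $x\in F$, $r>0$, $\lim_n\beta(n)^{-1}\nu^n(B_E(x,r))=\nu(B_E(x,r))$. (d) For every compact interval $I\subset(0,\infty)$, $x\in F$, $r>0$, $\lim_n\mathbf{P}^{G^n}_\rho(X^n_{\lfloor\gamma(n)t\rfloor}\in B_E(x,r))=\int_{B_F(x,r)}q_t(y)\nu(dy)$ uniformly for $t\in I$. Assumption (A2): for every compact interval $I\subset(0,\infty)$ and $r>0$, \[\lim_{\delta\to0}\limsup_{n\to\infty}\sup_{\substack{x,y\in B_{G^n}(\rho,\alpha(n)r):\\ d_{G^n}(x,y)\le\alpha(n)\delta}}\sup_{t\in I}\beta(n)\left|q^n_{\lfloor\gamma(n)t\rfloor}(x)-q^n_{\lfloor\gamma(n)t\rfloor}(y)\right|=0.\]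 *)

theory Defs
  imports "HOL-Analysis.Analysis" "HOL-Probability.Probability" "HOL-Library.Landau_Symbols"
begin

text \<open>A weighted graph is given by its vertex set V and a symmetric weight w;
  {x,y} is an edge iff w x y > 0.\<close>

definition adj :: "('a \<Rightarrow> 'a \<Rightarrow> real) \<Rightarrow> ('a \<times> 'a) set" where
  "adj w = {(x, y). 0 < w x y}"

definition wgraph :: "'a set \<Rightarrow> ('a \<Rightarrow> 'a \<Rightarrow> real) \<Rightarrow> bool" where
  "wgraph V w \<longleftrightarrow>
     (\<forall>x y. w x y = w y x) \<and> (\<forall>x y. 0 \<le> w x y) \<and>
     (\<forall>x y. 0 < w x y \<longrightarrow> x \<in> V \<and> y \<in> V \<and> x \<noteq> y) \<and>
     (\<forall>x\<in>V. finite {y. 0 < w x y}) \<and>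
     (\<forall>x\<in>V. \<forall>y\<in>V. (x, y) \<in> (adj w)\<^sup>*) \<and>
     (\<exists>x\<in>V. \<exists>y\<in>V. x \<noteq> y)"

definition gdist :: "('a \<Rightarrow> 'a \<Rightarrow> real) \<Rightarrow> 'a \<Rightarrow> 'a \<Rightarrow> nat" where
  "gdist w x y = (LEAST n. (x, y) \<in> adj w ^^ n)"

definition gball :: "'a set \<Rightarrow> ('a \<Rightarrow> 'a \<Rightarrow> real) \<Rightarrow> 'a \<Rightarrow> real \<Rightarrow> 'a set" where
  "gball V w x r = {y \<in> V. real (gdist w x y) < r}"

definition deg :: "('a \<Rightarrow> 'a \<Rightarrow> real) \<Rightarrow> 'a \<Rightarrow> real" where
  "deg w x = (\<Sum>y\<in>{y. 0 < w x y}. w x y)"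

text \<open>nu^G(A) = sum over x in A of mu_x (vertices outside V have mu_x = 0).\<close>
definition gmeasure :: "('a \<Rightarrow> 'a \<Rightarrow> real) \<Rightarrow> 'a set \<Rightarrow> ennreal" where
  "gmeasure w A = (\<Sum>\<^sub>\<infinity>x\<in>A. ennreal (deg w x))"

text \<open>walk_prob w m x A = P_x(X_m \<in> A) for the random walk with
  transition probabilities P(x,y) = w x y / mu_x (first-step decomposition).\<close>
fun walk_prob :: "('a \<Rightarrow> 'a \<Rightarrow> real) \<Rightarrow> nat \<Rightarrow> 'a \<Rightarrow> 'a set \<Rightarrow> real" where
  "walk_prob w 0 x A = indicator A x"
| "walk_prob w (Suc m) x A =
     (\<Sum>z\<in>{z. 0 < w x z}. (w x z / deg w x) * walk_prob w m z A)"

definition pG :: "('a \<Rightarrow> 'a \<Rightarrow> real) \<Rightarrow> nat \<Rightarrow> 'a \<Rightarrow> 'a \<Rightarrow> real" where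
  "pG w m x y = walk_prob w m x {y} / deg w y"

definition qG :: "('a \<Rightarrow> 'a \<Rightarrow> real) \<Rightarrow> nat \<Rightarrow> 'a \<Rightarrow> 'a \<Rightarrow> real" where
  "qG w m x y = (pG w m x y + pG w (Suc m) x y) / 2"

end

theory Submission
  imports Defs
begin


lemma wg_w_nonneg: "wgraph V w \<Longrightarrow> 0 \<le> w x y"
  unfolding wgraph_def by blast

lemma wg_pos_in: "wgraph V w \<Longrightarrow> 0 < w x y \<Longrightarrow> x \<in> V \<and> y \<in> V"
  unfolding wgraph_def by blast

lemma wg_nbrs_finite: assumes "wgraph V w" shows "finite {z. 0 < w x z}"
proof (cases "x \<in> V")
  case True then show ?thesis using assms unfolding wgraph_def by blast
next
  case False
  then have "{z. 0 < w x z} = {}" using wg_pos_in[OF assms] by blast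
  then show ?thesis by simp
qed

lemma deg_nonneg: "wgraph V w \<Longrightarrow> 0 \<le> deg w x"
  unfolding deg_def by (intro sum_nonneg) (simp add: wg_w_nonneg)

lemma deg_out: "wgraph V w \<Longrightarrow> x \<notin> V \<Longrightarrow> deg w x = 0"
  unfolding deg_def using wg_pos_in by (metis (mono_tags, lifting) mem_Collect_eq sum.neutral)

lemma deg_pos: assumes g: "wgraph V w" and x: "x \<in> V" shows "0 < deg w x"
proof -
  obtain y where y: "y \<in> V" "y \<noteq> x" using g unfolding wgraph_def by blast
  have "(x, y) \<in> (adj w)\<^sup>*" using g x y unfolding wgraph_def by blast
  then obtain z where "(x, z) \<in> adj w" using y(2)
    by (metis converse_rtranclE)
  then have z: "0 < w x z" by (simp add: adj_def)
  have "0 < (\<Sum>y\<in>{y. 0 < w x y}. w x y)"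
    using z wg_nbrs_finite[OF g, of x]
    by (intro sum_pos2[of _ z]) auto
  then show ?thesis by (simp add: deg_def)
qed

lemma walk_support:
  assumes g: "wgraph V w"
  shows "x \<in> V \<Longrightarrow> \<exists>S. finite S \<and> S \<subseteq> V \<and> (\<forall>A. walk_prob w m x A = (\<Sum>y\<in>S\<inter>A. walk_prob w m x {y}))"
proof (induction m arbitrary: x)
  case 0
  show ?case
    by (rule exI[of _ "{x}"]) (use 0 in \<open>auto simp: indicator_def\<close>)
next
  case (Suc m)
  define N where "N = {z. 0 < w x z}"
  have Nfin: "finite N" using wg_nbrs_finite[OF g] by (simp add: N_def)
  have NV: "N \<subseteq> V" using wg_pos_in[OF g] by (auto simp: N_def)
  have "\<forall>z\<in>N. \<exists>S. finite S \<and> S \<subseteq> V \<and> (\<forall>A. walk_prob w m z A = (\<Sum>y\<in>S\<inter>A. walk_prob w m z {y}))"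
    using Suc.IH NV by blast
  then obtain Sf where Sf: "\<And>z. z \<in> N \<Longrightarrow> finite (Sf z) \<and> Sf z \<subseteq> V \<and> (\<forall>A. walk_prob w m z A = (\<Sum>y\<in>Sf z\<inter>A. walk_prob w m z {y}))"
    by metis
  define S where "S = (\<Union>z\<in>N. Sf z)"
  have Sfin: "finite S" using Sf Nfin by (auto simp: S_def)
  have zero: "walk_prob w m z {y} = 0" if "z \<in> N" "y \<notin> Sf z" for z y
  proof -
    have "walk_prob w m z {y} = (\<Sum>y'\<in>Sf z\<inter>{y}. walk_prob w m z {y'})" using Sf[OF that(1)] by blast
    also have "Sf z \<inter> {y} = {}" using that(2) by blast
    finally show ?thesis by simp
  qed
  have inner: "(\<Sum>y\<in>S\<inter>A. walk_prob w m z {y}) = walk_prob w m z A" if z: "z \<in> N" for z A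
  proof -
    have "(\<Sum>y\<in>S\<inter>A. walk_prob w m z {y}) = (\<Sum>y\<in>Sf z\<inter>A. walk_prob w m z {y})"
    proof (rule sum.mono_neutral_right)
      show "finite (S \<inter> A)" using Sfin by simp
      show "Sf z \<inter> A \<subseteq> S \<inter> A" using z unfolding S_def by blast
      show "\<forall>i\<in>S \<inter> A - Sf z \<inter> A. walk_prob w m z {i} = 0" using zero[OF z] by blast
    qed
    also have "\<dots> = walk_prob w m z A" using Sf[OF z] by (metis (no_types))
    finally show ?thesis .
  qed
  show ?case
  proof (intro exI[of _ S] conjI allI)
    show "finite S" by (rule Sfin)
    show "S \<subseteq> V" using Sf by (auto simp: S_def)
    fix A
    have "(\<Sum>y\<in>S\<inter>A. walk_prob w (Suc m) x {y}) = (\<Sum>y\<in>S\<inter>A. \<Sum>z\<in>N. (w x z / deg w x) * walk_prob w m z {y})"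
      by (simp add: N_def)
    also have "\<dots> = (\<Sum>z\<in>N. \<Sum>y\<in>S\<inter>A. (w x z / deg w x) * walk_prob w m z {y})"
      by (rule sum.swap)
    also have "\<dots> = (\<Sum>z\<in>N. (w x z / deg w x) * walk_prob w m z A)"
    proof (intro sum.cong refl)
      fix z assume z: "z \<in> N"
      show "(\<Sum>y\<in>S\<inter>A. (w x z / deg w x) * walk_prob w m z {y}) = (w x z / deg w x) * walk_prob w m z A"
        by (subst sum_distrib_left[symmetric]) (simp only: inner[OF z])
    qed
    also have "\<dots> = walk_prob w (Suc m) x A" by (simp add: N_def)
    finally show "walk_prob w (Suc m) x A = (\<Sum>y\<in>S\<inter>A. walk_prob w (Suc m) x {y})" by simp
  qed
qed

lemma gmeasure_ge:
  assumes g: "wgraph V w" and "finite S"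
  shows "ennreal (\<Sum>y\<in>S\<inter>B. deg w y) \<le> gmeasure w B"
proof -
  have "ennreal (\<Sum>y\<in>S\<inter>B. deg w y) = (\<Sum>y\<in>S\<inter>B. ennreal (deg w y))"
    using deg_nonneg[OF g] by (simp add: sum_ennreal)
  also have "\<dots> = (\<Sum>\<^sub>\<infinity>y\<in>S\<inter>B. ennreal (deg w y))" using assms by simp
  also have "\<dots> \<le> (\<Sum>\<^sub>\<infinity>y\<in>B. ennreal (deg w y))"
    by (intro infsum_mono_neutral) (auto simp: nonneg_summable_on_complete)
  finally show ?thesis by (simp add: gmeasure_def)
qed

lemma gmeasure_eq:
  assumes g: "wgraph V w" and "finite S" and "B \<inter> V \<subseteq> S"
  shows "gmeasure w B = ennreal (\<Sum>y\<in>S\<inter>B. deg w y)"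
proof -
  have "gmeasure w B = (\<Sum>\<^sub>\<infinity>y\<in>S\<inter>B. ennreal (deg w y))"
    unfolding gmeasure_def
  proof (rule infsum_cong_neutral)
    fix x assume "x \<in> B - S \<inter> B"
    then have "x \<notin> V" using assms(3) by blast
    then show "ennreal (deg w x) = 0" using deg_out[OF g] by simp
  qed auto
  also have "\<dots> = (\<Sum>y\<in>S\<inter>B. ennreal (deg w y))" using assms by simp
  also have "\<dots> = ennreal (\<Sum>y\<in>S\<inter>B. deg w y)"
    using deg_nonneg[OF g] by (simp add: sum_ennreal)
  finally show ?thesis .
qed

lemma final_arith:
  fixes \<beta> D d W Qg c \<eta> \<eta>2 \<nu>B M \<epsilon> :: real
  assumes "\<beta> > 0" "D \<ge> 0" "d = D / \<beta>"
    "(Qg - \<eta>) * D \<le> \<beta> * W" "\<beta> * W \<le> (Qg + \<eta>) * D"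
    "\<bar>W - c * \<nu>B\<bar> \<le> \<eta>2 + \<eta> * \<nu>B" "\<bar>d - \<nu>B\<bar> \<le> \<eta>2" "\<eta>2 \<le> \<nu>B / 2" "\<nu>B > 0"
    "\<bar>c\<bar> \<le> M" "\<eta>2 * (1 + M) * 4 \<le> \<epsilon> * \<nu>B" "12 * \<eta> \<le> \<epsilon>" "\<eta> > 0" "\<eta>2 \<ge> 0"
  shows "\<bar>Qg - c\<bar> \<le> \<epsilon>"
proof -
  have W1: "(Qg - \<eta>) * d \<le> W"
  proof -
    have "(Qg - \<eta>) * d = ((Qg - \<eta>) * D) / \<beta>" using assms(3) by simp
    also have "\<dots> \<le> W" using assms(1,4) by (simp add: pos_divide_le_eq mult.commute)
    finally show ?thesis .
  qed
  have W2: "W \<le> (Qg + \<eta>) * d"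
  proof -
    have "(Qg + \<eta>) * d = ((Qg + \<eta>) * D) / \<beta>" using assms(3) by simp
    moreover have "W \<le> ((Qg + \<eta>) * D) / \<beta>" using assms(1,5) by (simp add: pos_le_divide_eq mult.commute)
    ultimately show ?thesis by simp
  qed
  have d1: "d \<ge> \<nu>B / 2" "d \<le> 3 * \<nu>B / 2" using assms(7,8) by auto
  have "\<bar>Qg * d - W\<bar> \<le> \<eta> * d" using W1 W2 by (auto simp: algebra_simps abs_le_iff)
  then have h1: "\<bar>Qg * d - c * \<nu>B\<bar> \<le> \<eta> * d + \<eta>2 + \<eta> * \<nu>B" using assms(6) by linarith
  have h2: "\<bar>c * (\<nu>B - d)\<bar> \<le> M * \<eta>2"
    using assms(7,10) by (simp add: abs_mult mult_mono')
  have "\<bar>Qg - c\<bar> * d = \<bar>(Qg * d - c * \<nu>B) + c * (\<nu>B - d)\<bar>"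
  proof -
    have "d \<ge> 0" using d1 assms(9) by linarith
    then have "\<bar>Qg - c\<bar> * d = \<bar>(Qg - c) * d\<bar>" by (simp add: abs_mult)
    moreover have "(Qg - c) * d = (Qg * d - c * \<nu>B) + c * (\<nu>B - d)" by (simp add: algebra_simps)
    ultimately show ?thesis by simp
  qed
  also have "\<dots> \<le> \<eta> * d + \<eta>2 + \<eta> * \<nu>B + M * \<eta>2" using h1 h2 abs_triangle_ineq by smt
  also have "\<dots> \<le> \<epsilon> * d"
  proof -
    have e0: "\<epsilon> \<ge> 0" using assms(12,13) by linarith
    have "\<eta> * \<nu>B \<le> \<eta> * (2 * d)" using d1 assms(13) by (intro mult_left_mono) auto
    then have f1: "\<eta> * \<nu>B \<le> 2 * (\<eta> * d)" by (simp add: algebra_simps)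
    have "\<epsilon> * \<nu>B \<le> \<epsilon> * (2 * d)" using d1 e0 by (intro mult_left_mono) auto
    then have f2: "\<epsilon> * \<nu>B \<le> 2 * (\<epsilon> * d)" by (simp add: algebra_simps)
    have "(12 * \<eta>) * d \<le> \<epsilon> * d" using assms(12) d1 assms(9) by (intro mult_right_mono) auto
    then have f3: "12 * (\<eta> * d) \<le> \<epsilon> * d" by (simp add: algebra_simps)
    have f4: "\<eta>2 * (1 + M) * 4 = 4 * \<eta>2 + 4 * (M * \<eta>2)" by (simp add: algebra_simps)
    have e1: "\<eta> * d \<ge> 0" using d1 assms(9,13) by simp
    show ?thesis using f1 f2 f3 f4 assms(11) e1 by linarith
  qed
  finally have "\<bar>Qg - c\<bar> * d \<le> \<epsilon> * d" .
  moreover have "d > 0" using d1 assms(9) by linarith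
  ultimately show ?thesis by simp
qed

definition supp :: "('a \<Rightarrow> 'a \<Rightarrow> real) \<Rightarrow> nat \<Rightarrow> 'a \<Rightarrow> 'a set \<Rightarrow> bool" where
  "supp w m x S \<longleftrightarrow> finite S \<and> (\<forall>A. walk_prob w m x A = (\<Sum>y\<in>S\<inter>A. walk_prob w m x {y}))"

lemma supp_zero: "supp w m x S \<Longrightarrow> y \<notin> S \<Longrightarrow> walk_prob w m x {y} = 0"
proof -
  assume a: "supp w m x S" "y \<notin> S"
  then have "walk_prob w m x {y} = (\<Sum>y'\<in>S\<inter>{y}. walk_prob w m x {y'})" unfolding supp_def by blast
  also have "S \<inter> {y} = {}" using a(2) by blast
  finally show ?thesis by simp
qed

lemma supp_mono: assumes "supp w m x S" "S \<subseteq> T" "finite T" shows "supp w m x T"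
  unfolding supp_def
proof (intro conjI allI)
  show "finite T" by fact
  fix A
  have "(\<Sum>y\<in>T\<inter>A. walk_prob w m x {y}) = (\<Sum>y\<in>S\<inter>A. walk_prob w m x {y})"
  proof (rule sum.mono_neutral_right)
    show "finite (T \<inter> A)" using assms(3) by simp
    show "S \<inter> A \<subseteq> T \<inter> A" using assms(2) by blast
    show "\<forall>i\<in>T \<inter> A - S \<inter> A. walk_prob w m x {i} = 0" using supp_zero[OF assms(1)] by blast
  qed
  also have "\<dots> = walk_prob w m x A" using assms(1) unfolding supp_def by (metis (no_types))
  finally show "walk_prob w m x A = (\<Sum>y\<in>T\<inter>A. walk_prob w m x {y})" by simp
qed

lemma supp2:
  assumes g: "wgraph V w" and x: "x \<in> V"
  obtains S where "finite S" "S \<subseteq> V" "supp w m x S" "supp w (Suc m) x S"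
proof -
  obtain S1 where S1: "finite S1" "S1 \<subseteq> V" "\<forall>A. walk_prob w m x A = (\<Sum>y\<in>S1\<inter>A. walk_prob w m x {y})"
    using walk_support[OF g x] by blast
  obtain S2 where S2: "finite S2" "S2 \<subseteq> V" "\<forall>A. walk_prob w (Suc m) x A = (\<Sum>y\<in>S2\<inter>A. walk_prob w (Suc m) x {y})"
    using walk_support[OF g x] by blast
  have s1: "supp w m x S1" unfolding supp_def using S1 by blast
  have s2: "supp w (Suc m) x S2" unfolding supp_def using S2 by blast
  have "supp w m x (S1 \<union> S2)" using S1(1) S2(1) by (intro supp_mono[OF s1]) auto
  moreover have "supp w (Suc m) x (S1 \<union> S2)" using S1(1) S2(1) by (intro supp_mono[OF s2]) auto
  ultimately show ?thesis using that S1 S2 by blast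
qed

lemma W_sum:
  assumes g: "wgraph V w" and S: "finite S" "S \<subseteq> V" "supp w m x S" "supp w (Suc m) x S"
  shows "(walk_prob w m x B + walk_prob w (Suc m) x B) / 2 = (\<Sum>y\<in>S\<inter>B. deg w y * qG w m x y)"
proof -
  have e1: "walk_prob w m x B = (\<Sum>y\<in>S\<inter>B. walk_prob w m x {y})" using S(3) unfolding supp_def by (metis (no_types))
  have e2: "walk_prob w (Suc m) x B = (\<Sum>y\<in>S\<inter>B. walk_prob w (Suc m) x {y})" using S(4) unfolding supp_def by (metis (no_types))
  have "deg w y * qG w m x y = (walk_prob w m x {y} + walk_prob w (Suc m) x {y}) / 2" if "y \<in> S \<inter> B" for y
  proof -
    have "deg w y > 0" using deg_pos[OF g] that S(2) by blast
    then show ?thesis unfolding qG_def pG_def by (simp add: field_simps)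
  qed
  then have "(\<Sum>y\<in>S\<inter>B. deg w y * qG w m x y) = (\<Sum>y\<in>S\<inter>B. (walk_prob w m x {y} + walk_prob w (Suc m) x {y}) / 2)"
    by (rule sum.cong[OF refl])
  also have "\<dots> = (walk_prob w m x B + walk_prob w (Suc m) x B) / 2"
    unfolding e1 e2 by (simp del: walk_prob.simps add: sum.distrib flip: sum_divide_distrib)
  finally show ?thesis by simp
qed

lemma qG_zero: "supp w m x S \<Longrightarrow> supp w (Suc m) x S \<Longrightarrow> y \<notin> S \<Longrightarrow> qG w m x y = 0"
proof -
  assume a: "supp w m x S" "supp w (Suc m) x S" "y \<notin> S"
  have "walk_prob w m x {y} = 0" by (rule supp_zero[OF a(1) a(3)])
  moreover have "walk_prob w (Suc m) x {y} = 0" by (rule supp_zero[OF a(2) a(3)])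
  ultimately show ?thesis unfolding qG_def pG_def by (simp del: walk_prob.simps)
qed

lemma avg_bound:
  fixes A1 A2 L1 L2 X Y e :: real
  assumes "\<bar>A1 - L1\<bar> < e" "\<bar>A2 - L2\<bar> < e" "X - Y \<le> L1" "L1 \<le> X + Y" "X - Y \<le> L2" "L2 \<le> X + Y"
  shows "\<bar>(A1 + A2) / 2 - X\<bar> \<le> e + Y"
  using assms by (auto simp: abs_le_iff abs_less_iff field_simps)



lemma closed_F:
  fixes F :: "'a::metric_space set"
  assumes "\<And>x r. r > 0 \<Longrightarrow> compact (F \<inter> cball x r)"
  shows "closed F"
proof -
  have "y \<in> F" if "y \<in> closure F" for y
  proof -
    have "y \<in> ball y 1 \<inter> closure F" using that by simp
    also have "\<dots> \<subseteq> closure (ball y 1 \<inter> F)" by (rule open_Int_closure_subset) simp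
    also have "\<dots> \<subseteq> closure (F \<inter> cball y 1)" by (intro closure_mono) auto
    also have "\<dots> = F \<inter> cball y 1" using assms[of 1 y] by (simp add: compact_imp_closed)
    finally show ?thesis by simp
  qed
  then show ?thesis using closure_subset_eq by blast
qed

lemma qcont_slice:
  assumes "continuous_on ({0<..} \<times> F) (\<lambda>(t, x). q t x)" "(s::real) > 0"
  shows "continuous_on F (q s)"
proof -
  have "continuous_on F ((\<lambda>(t, x). q t x) \<circ> (\<lambda>y. (s, y)))"
    by (rule continuous_on_compose) (auto intro!: continuous_intros continuous_on_subset[OF assms(1)] simp: assms(2))
  then show ?thesis by (simp add: o_def)
qed

lemma lint_bound:
  fixes f :: "'a::metric_space \<Rightarrow> real"
  assumes nu: "sets \<nu> = sets borel" and A: "A \<in> sets borel" "emeasure \<nu> A < \<infinity>"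
    and f: "continuous_on A f" and b: "\<And>y. y \<in> A \<Longrightarrow> lo \<le> f y \<and> f y \<le> hi"
  shows "lo * measure \<nu> A \<le> (LINT y:A|\<nu>. f y) \<and> (LINT y:A|\<nu>. f y) \<le> hi * measure \<nu> A"
proof -
  have Anu: "A \<in> sets \<nu>" using A nu by simp
  have meas: "(\<lambda>x. indicator A x *\<^sub>R f x) \<in> borel_measurable \<nu>"
    using borel_measurable_continuous_on_indicator[OF A(1) f] measurable_cong_sets[OF nu refl] by blast
  have ci: "set_integrable \<nu> A (\<lambda>_. c)" for c :: real
    unfolding set_integrable_def using Anu A(2)
    by (intro integrable_scaleR_left integrable_real_indicator) auto
  have fi: "set_integrable \<nu> A f"
  proof (rule set_integrable_bound[OF ci[of "\<bar>lo\<bar> + \<bar>hi\<bar>"]])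
    show "set_borel_measurable \<nu> A f" unfolding set_borel_measurable_def using meas by simp
    show "AE x in \<nu>. x \<in> A \<longrightarrow> norm (f x) \<le> norm (\<bar>lo\<bar> + \<bar>hi\<bar>)"
      using b by (intro AE_I2) force
  qed
  have "(LINT y:A|\<nu>. lo) \<le> (LINT y:A|\<nu>. f y)" using b by (intro set_integral_mono[OF ci fi]) auto
  moreover have "(LINT y:A|\<nu>. f y) \<le> (LINT y:A|\<nu>. hi)" using b by (intro set_integral_mono[OF fi ci]) auto
  moreover have "(LINT y:A|\<nu>. c) = c * measure \<nu> A" for c :: real
    using set_integral_const[OF Anu, of c] A(2) by (simp add: mult.commute)
  ultimately show ?thesis by simp
qed

lemma unif_q:
  fixes F :: "'a::metric_space set" and q :: "real \<Rightarrow> 'a \<Rightarrow> real"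
  assumes qc: "continuous_on ({0<..} \<times> F) (\<lambda>(t, x). q t x)" and cK: "compact (F \<inter> cball x 1)"
    and a: "0 < a" and e: "\<eta> > 0"
  shows "\<exists>\<delta>>0. \<forall>s t y z. s \<in> {a..b} \<longrightarrow> t \<in> {a..b} \<longrightarrow> y \<in> F \<inter> cball x 1 \<longrightarrow> z \<in> F \<inter> cball x 1 \<longrightarrow>
            \<bar>s - t\<bar> + dist y z < \<delta> \<longrightarrow> \<bar>q s y - q t z\<bar> < \<eta>"
proof -
  define K where "K = {a..b} \<times> (F \<inter> cball x 1)"
  have "compact K" unfolding K_def by (intro compact_Times cK compact_Icc)
  moreover have "continuous_on K (\<lambda>(t, x). q t x)"
    by (rule continuous_on_subset[OF qc]) (use a in \<open>auto simp: K_def\<close>)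
  ultimately have "uniformly_continuous_on K (\<lambda>(t, x). q t x)" by (rule compact_uniformly_continuous[rotated])
  then obtain d where d: "d > 0" "\<forall>p\<in>K. \<forall>p'\<in>K. dist p' p < d \<longrightarrow> dist ((\<lambda>(t, x). q t x) p') ((\<lambda>(t, x). q t x) p) < \<eta>"
    unfolding uniformly_continuous_on_def using e by blast
  show ?thesis
  proof (intro exI[of _ d] conjI allI impI)
    fix s t y z assume h: "s \<in> {a..b}" "t \<in> {a..b}" "y \<in> F \<inter> cball x 1" "z \<in> F \<inter> cball x 1" "\<bar>s - t\<bar> + dist y z < d"
    have "dist (s, y) (t, z) \<le> \<bar>s - t\<bar> + dist y z"
      unfolding dist_Pair_Pair using sqrt_sum_squares_le_sum_abs[of "dist s t" "dist y z"] by (simp add: dist_real_def)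
    then have "dist (s, y) (t, z) < d" using h(5) by linarith
    then have "dist (q s y) (q t z) < \<eta>" using d(2) h(1-4) unfolding K_def by fastforce
    then show "\<bar>q s y - q t z\<bar> < \<eta>" by (simp add: dist_real_def)
  qed (rule d(1))
qed


lemma A2_use:
  fixes P :: "real \<Rightarrow> nat \<Rightarrow> 'a \<Rightarrow> 'a \<Rightarrow> real \<Rightarrow> bool" and f :: "nat \<Rightarrow> 'a \<Rightarrow> 'a \<Rightarrow> real \<Rightarrow> real"
  assumes lim: "((\<lambda>\<delta>. limsup (\<lambda>n. SUP (x, y, t) \<in> {(x, y, t). P \<delta> n x y t}. ereal (f n x y t))) \<longlongrightarrow> 0) (at_right 0)"
    and e: "\<eta> > 0"
  shows "\<exists>\<delta>>0. eventually (\<lambda>n. \<forall>x y t. P \<delta> n x y t \<longrightarrow> f n x y t < \<eta>) sequentially"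
proof -
  have "eventually (\<lambda>\<delta>. limsup (\<lambda>n. SUP (x, y, t) \<in> {(x, y, t). P \<delta> n x y t}. ereal (f n x y t)) < ereal \<eta>) (at_right 0)"
    using order_tendstoD(2)[OF lim] e by simp
  then obtain b0 where b0: "b0 > 0" "\<And>\<delta>. \<delta> > 0 \<Longrightarrow> \<delta> < b0 \<Longrightarrow>
      limsup (\<lambda>n. SUP (x, y, t) \<in> {(x, y, t). P \<delta> n x y t}. ereal (f n x y t)) < ereal \<eta>"
    unfolding eventually_at_right_field by auto
  define \<delta> where "\<delta> = b0 / 2"
  have d: "\<delta> > 0" "\<delta> < b0" using b0 by (auto simp: \<delta>_def)
  have "eventually (\<lambda>n. (SUP (x, y, t) \<in> {(x, y, t). P \<delta> n x y t}. ereal (f n x y t)) < ereal \<eta>) sequentially"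
    using Limsup_lessD[OF b0(2)[OF d]] by simp
  then have "eventually (\<lambda>n. \<forall>x y t. P \<delta> n x y t \<longrightarrow> f n x y t < \<eta>) sequentially"
  proof (rule eventually_mono)
    fix n assume h: "(SUP (x, y, t) \<in> {(x, y, t). P \<delta> n x y t}. ereal (f n x y t)) < ereal \<eta>"
    show "\<forall>x y t. P \<delta> n x y t \<longrightarrow> f n x y t < \<eta>"
    proof (intro allI impI)
      fix x y t assume "P \<delta> n x y t"
      then have "ereal (f n x y t) \<le> (SUP (x, y, t) \<in> {(x, y, t). P \<delta> n x y t}. ereal (f n x y t))"
        by (intro SUP_upper2[of "(x, y, t)"]) auto
      then have "ereal (f n x y t) < ereal \<eta>" using h by (rule le_less_trans)
      then show "f n x y t < \<eta>" by simp
    qed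
  qed
  then show ?thesis using d by blast
qed



theorem proposition2p2:
  fixes F :: "'a::metric_space set"
    and \<rho> :: 'a
    and \<nu> :: "'a measure"
    and q :: "real \<Rightarrow> 'a \<Rightarrow> real"
    and V :: "nat \<Rightarrow> 'a set"
    and w :: "nat \<Rightarrow> 'a \<Rightarrow> 'a \<Rightarrow> real"
    and \<alpha> \<beta> \<gamma> :: "nat \<Rightarrow> real"
    and g :: "nat \<Rightarrow> 'a \<Rightarrow> 'a"
    and a b :: real
  assumes F_bcompact: "\<And>x r. r > 0 \<Longrightarrow> compact (F \<inter> cball x r)"
    and rho_F: "\<rho> \<in> F"
    and nu_sets: "sets \<nu> = sets borel"
    and nu_ext: "\<And>A. A \<in> sets borel \<Longrightarrow> emeasure \<nu> A = emeasure \<nu> (A \<inter> F)"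
    and nu_locfin: "\<And>x. x \<in> F \<Longrightarrow> \<exists>r>0. emeasure \<nu> (ball x r \<inter> F) < \<infinity>"
    and nu_inner_reg: "\<And>A. A \<in> sets borel \<Longrightarrow>
          emeasure \<nu> (A \<inter> F) = (SUP K \<in> {K. K \<subseteq> A \<inter> F \<and> compact K}. emeasure \<nu> K)"
    and nu_full: "\<And>x r. x \<in> F \<Longrightarrow> r > 0 \<Longrightarrow> emeasure \<nu> (ball x r \<inter> F) > 0"
    and q_cont: "continuous_on ({0<..} \<times> F) (\<lambda>(t, x). q t x)"
    and q_nonneg: "\<And>t x. t > 0 \<Longrightarrow> x \<in> F \<Longrightarrow> q t x \<ge> 0"
    and q_int: "\<And>t. t > 0 \<Longrightarrow> (\<integral>\<^sup>+ x \<in> F. ennreal (q t x) \<partial>\<nu>) = 1"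
    and graphs: "\<And>n. n \<ge> 1 \<Longrightarrow> wgraph (V n) (w n)"
    and V_root: "\<And>n. n \<ge> 1 \<Longrightarrow> \<rho> \<in> V n"
    and alpha_nonneg: "\<And>n. \<alpha> n \<ge> 0" and alpha_div: "filterlim \<alpha> at_top sequentially"
    and beta_nonneg: "\<And>n. \<beta> n \<ge> 0" and beta_div: "filterlim \<beta> at_top sequentially"
    and gamma_nonneg: "\<And>n. \<gamma> n \<ge> 0" and gamma_div: "filterlim \<gamma> at_top sequentially"
    and g_min: "\<And>n x. n \<ge> 1 \<Longrightarrow> g n x \<in> V n \<and> (\<forall>v \<in> V n. dist x (g n x) \<le> dist x v)"
    and I: "0 < a" "a \<le> b"
    \<comment> \<open>(A1)(a)\<close>
    and A1a_lower: "\<exists>c1>0. \<forall>n\<ge>1. \<forall>x\<in>V n. \<forall>y\<in>V n.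
          real (gdist (w n) x y) \<ge> c1 * \<alpha> n * dist x y"
    and A1a_upper: "\<exists>\<alpha>'. (\<forall>n. \<alpha>' n \<ge> 0) \<and> \<alpha>' \<in> o(\<alpha>) \<and>
          (\<forall>r>0. \<exists>c2 n0. \<forall>n\<ge>n0. \<forall>x \<in> V n \<inter> ball \<rho> r. \<forall>y \<in> V n \<inter> ball \<rho> r.
             real (gdist (w n) x y) \<le> c2 * \<alpha> n * dist x y + \<alpha>' n)"
    \<comment> \<open>(A1)(b)\<close>
    and A1b: "\<And>r. r > 0 \<Longrightarrow>
          (\<lambda>n. SUP x \<in> ball \<rho> r \<inter> F. infdist x (V n)) \<longlonglongrightarrow> 0"
    \<comment> \<open>(A1)(c)\<close>
    and A1c: "\<And>x r. x \<in> F \<Longrightarrow> r > 0 \<Longrightarrow>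
          (\<lambda>n. ennreal (1 / \<beta> n) * gmeasure (w n) (ball x r)) \<longlonglongrightarrow> emeasure \<nu> (ball x r)"
    \<comment> \<open>(A1)(d)\<close>
    and A1d: "\<And>a' b' x r. 0 < a' \<Longrightarrow> a' \<le> b' \<Longrightarrow> x \<in> F \<Longrightarrow> r > 0 \<Longrightarrow>
          uniform_limit {a'..b'}
            (\<lambda>n t. walk_prob (w n) (nat \<lfloor>\<gamma> n * t\<rfloor>) \<rho> (ball x r))
            (\<lambda>t. (LINT y : ball x r \<inter> F | \<nu>. q t y)) sequentially"
    \<comment> \<open>(A2)\<close>
    and A2: "\<And>a' b' r. 0 < a' \<Longrightarrow> a' \<le> b' \<Longrightarrow> r > 0 \<Longrightarrow>
          ((\<lambda>\<delta>. limsup (\<lambda>n.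
              SUP (x, y, t) \<in> {(x, y, t). x \<in> gball (V n) (w n) \<rho> (\<alpha> n * r) \<and>
                                        y \<in> gball (V n) (w n) \<rho> (\<alpha> n * r) \<and>
                                        real (gdist (w n) x y) \<le> \<alpha> n * \<delta> \<and>
                                        t \<in> {a'..b'}}.
                ereal (\<beta> n * \<bar>qG (w n) (nat \<lfloor>\<gamma> n * t\<rfloor>) \<rho> x
                               - qG (w n) (nat \<lfloor>\<gamma> n * t\<rfloor>) \<rho> y\<bar>)))
           \<longlongrightarrow> 0) (at_right 0)"
  shows "\<forall>x \<in> F. (\<lambda>n. SUP t \<in> {a..b}.
           \<bar>\<beta> n * qG (w n) (nat \<lfloor>\<gamma> n * t\<rfloor>) \<rho> (g n x) - q t x\<bar>) \<longlonglongrightarrow> 0"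
proof
  fix x assume xF: "x \<in> F"
  have ev_a: "eventually (\<lambda>n. 1 \<le> \<alpha> n) sequentially" using alpha_div by (simp add: filterlim_at_top)
  have ev_b: "eventually (\<lambda>n. 1 \<le> \<beta> n) sequentially" using beta_div by (simp add: filterlim_at_top)
  obtain \<alpha>' where \<alpha>'0: "\<forall>n. \<alpha>' n \<ge> 0" and \<alpha>'o: "\<alpha>' \<in> o(\<alpha>)"
    and \<alpha>'b: "\<forall>r>0. \<exists>c2 n0. \<forall>n\<ge>n0. \<forall>x \<in> V n \<inter> ball \<rho> r. \<forall>y \<in> V n \<inter> ball \<rho> r.
             real (gdist (w n) x y) \<le> c2 * \<alpha> n * dist x y + \<alpha>' n"
    using A1a_upper by blast
  define R0 where "R0 = dist \<rho> x + 2"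
  have R0: "R0 > 0" by (simp add: R0_def add_nonneg_pos)
  obtain c2 n0 where c2: "\<forall>n\<ge>n0. \<forall>u \<in> V n \<inter> ball \<rho> R0. \<forall>v \<in> V n \<inter> ball \<rho> R0.
             real (gdist (w n) u v) \<le> c2 * \<alpha> n * dist u v + \<alpha>' n"
    using \<alpha>'b R0 by blast
  define C where "C = max c2 1"
  define R where "R = C * R0 + 1"
  have C1: "C \<ge> 1" by (simp add: C_def)
  have Rpos: "R > 0" using C1 R0 by (simp add: R_def add_pos_pos)
  have gdist_bd: "real (gdist (w n) u v) \<le> C * \<alpha> n * dist u v + \<alpha>' n"
    if "n \<ge> n0" "u \<in> V n \<inter> ball \<rho> R0" "v \<in> V n \<inter> ball \<rho> R0" for n u v
  proof -
    have "c2 * (\<alpha> n * dist u v) \<le> C * (\<alpha> n * dist u v)"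
      using alpha_nonneg[of n] by (intro mult_right_mono) (auto simp: C_def)
    moreover have "real (gdist (w n) u v) \<le> c2 * \<alpha> n * dist u v + \<alpha>' n" using c2 that by blast
    ultimately show ?thesis by (simp add: mult.assoc)
  qed
  obtain M where M: "M \<ge> 0" "\<forall>t\<in>{a..b}. \<bar>q t x\<bar> \<le> M"
  proof -
    have "continuous_on {a..b} ((\<lambda>(t, x). q t x) \<circ> (\<lambda>t. (t, x)))"
      by (rule continuous_on_compose) (use I in \<open>auto intro!: continuous_intros continuous_on_subset[OF q_cont] simp: xF\<close>)
    then have "continuous_on {a..b} (\<lambda>t. q t x)" by (simp add: o_def)
    then have "bounded ((\<lambda>t. q t x) ` {a..b})" by (intro compact_imp_bounded compact_continuous_image) auto
    then obtain M0 where "\<forall>y\<in>(\<lambda>t. q t x) ` {a..b}. \<bar>y\<bar> \<le> M0" unfolding bounded_real by blast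
    then show ?thesis using that[of "max M0 0"] by force
  qed
  have g_near: "eventually (\<lambda>n. g n x \<in> V n \<and> dist x (g n x) < r) sequentially" if r: "r > 0" for r
  proof -
    define RB where "RB = dist \<rho> x + 1"
    have RB: "RB > 0" by (simp add: RB_def add_nonneg_pos)
    have "eventually (\<lambda>n. (SUP y \<in> ball \<rho> RB \<inter> F. infdist y (V n)) < r) sequentially"
      using order_tendstoD(2)[OF A1b[OF RB] r] .
    moreover have "eventually (\<lambda>n. n \<ge> 1) sequentially" by (rule eventually_ge_at_top)
    ultimately show ?thesis
    proof eventually_elim
      case (elim n)
      have rV: "\<rho> \<in> V n" using V_root elim(2) by blast
      have bdd: "bdd_above ((\<lambda>y. infdist y (V n)) ` (ball \<rho> RB \<inter> F))"
      proof (rule bdd_aboveI2)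
        fix y assume "y \<in> ball \<rho> RB \<inter> F"
        then show "infdist y (V n) \<le> RB" using infdist_le[OF rV, of y] by (simp add: dist_commute)
      qed
      have "x \<in> ball \<rho> RB \<inter> F" using xF by (simp add: RB_def)
      then have "infdist x (V n) \<le> (SUP y \<in> ball \<rho> RB \<inter> F. infdist y (V n))" by (rule cSUP_upper[OF _ bdd])
      then have "infdist x (V n) < r" using elim(1) by linarith
      moreover have "infdist x (V n) = (INF v\<in>V n. dist x v)" using rV infdist_notempty by blast
      ultimately have lt: "(INF v\<in>V n. dist x v) < r" by simp
      have bddb: "bdd_below ((\<lambda>v. dist x v) ` V n)" by (intro bdd_belowI2[of _ 0]) auto
      obtain v where v: "v \<in> V n" "dist x v < r" using lt cINF_less_iff[OF _ bddb] rV by blast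
      have "g n x \<in> V n \<and> dist x (g n x) \<le> dist x v" using g_min[OF elim(2)] v(1) by blast
      then show ?case using v(2) by linarith
    qed
  qed
  have core: "eventually (\<lambda>n. \<forall>t\<in>{a..b}. \<bar>\<beta> n * qG (w n) (nat \<lfloor>\<gamma> n * t\<rfloor>) \<rho> (g n x) - q t x\<bar> \<le> \<epsilon>) sequentially"
    if \<epsilon>: "\<epsilon> > 0" for \<epsilon>
  proof -
    define \<eta> where "\<eta> = \<epsilon> / 12"
    have \<eta>: "\<eta> > 0" using \<epsilon> by (simp add: \<eta>_def)
    obtain \<delta>1 where \<delta>1: "\<delta>1 > 0" and \<delta>1b: "\<forall>s t y z. s \<in> {a..b+1} \<longrightarrow> t \<in> {a..b+1} \<longrightarrow> y \<in> F \<inter> cball x 1 \<longrightarrow> z \<in> F \<inter> cball x 1 \<longrightarrow>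
            \<bar>s - t\<bar> + dist y z < \<delta>1 \<longrightarrow> \<bar>q s y - q t z\<bar> < \<eta>"
      using unif_q[OF q_cont F_bcompact[of 1 x] I(1) \<eta>, of "b+1"] by auto
    obtain \<delta> where \<delta>: "\<delta> > 0" and evA2: "eventually (\<lambda>n. \<forall>y z t.
        (y \<in> gball (V n) (w n) \<rho> (\<alpha> n * R) \<and> z \<in> gball (V n) (w n) \<rho> (\<alpha> n * R) \<and>
         real (gdist (w n) y z) \<le> \<alpha> n * \<delta> \<and> t \<in> {a..b}) \<longrightarrow>
        \<beta> n * \<bar>qG (w n) (nat \<lfloor>\<gamma> n * t\<rfloor>) \<rho> y - qG (w n) (nat \<lfloor>\<gamma> n * t\<rfloor>) \<rho> z\<bar> < \<eta>) sequentially"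
      using A2_use[OF A2[OF I(1) I(2) Rpos] \<eta>] by blast
    obtain rf where rf: "rf > 0" "emeasure \<nu> (ball x rf \<inter> F) < \<infinity>" using nu_locfin[OF xF] by auto
    define r where "r = min (min (\<delta>1/2) (\<delta>/(4*C))) (min rf (1/2))"
    have r: "r > 0" "r \<le> \<delta>1/2" "r \<le> \<delta>/(4*C)" "r \<le> rf" "r < 1"
      using \<delta>1 \<delta> rf C1 by (auto simp: r_def)
    have Cr: "4 * C * r \<le> \<delta>" using r(3) C1 by (simp add: field_simps)
    define B where "B = ball x r"
    have Bb: "B \<in> sets borel" by (simp add: B_def)
    have Fclosed: "closed F" by (rule closed_F[OF F_bcompact])
    have BF: "B \<inter> F \<in> sets borel" using Fclosed by (simp add: B_def)
    have BFnu: "B \<inter> F \<in> sets \<nu>" using BF nu_sets by simp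
    have fin: "emeasure \<nu> (B \<inter> F) < \<infinity>"
    proof -
      have m1: "ball x rf \<inter> F \<in> sets \<nu>" using Fclosed nu_sets by simp
      have m2: "B \<inter> F \<subseteq> ball x rf \<inter> F" using r(4) by (auto simp: B_def)
      have "emeasure \<nu> (B \<inter> F) \<le> emeasure \<nu> (ball x rf \<inter> F)" by (rule emeasure_mono[OF m2 m1])
      then show ?thesis using rf(2) by (simp add: order_le_less_trans)
    qed
    define \<nu>B where "\<nu>B = measure \<nu> (B \<inter> F)"
    have emBF: "emeasure \<nu> (B \<inter> F) = ennreal \<nu>B"
      unfolding \<nu>B_def using fin by (intro emeasure_eq_ennreal_measure) simp
    have \<nu>Bpos: "\<nu>B > 0"
    proof -
      have "emeasure \<nu> (ball x r \<inter> F) > 0" by (rule nu_full[OF xF r(1)])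
      then show ?thesis using emBF by (simp add: B_def)
    qed
    have emB: "emeasure \<nu> B = ennreal \<nu>B" using nu_ext[OF Bb] emBF by simp
    define \<eta>2 where "\<eta>2 = min (\<nu>B/2) (\<epsilon> * \<nu>B / (4 * (1 + M)))"
    have \<eta>2: "\<eta>2 > 0" "\<eta>2 \<le> \<nu>B/2" "\<eta>2 * (1 + M) * 4 \<le> \<epsilon> * \<nu>B"
    proof -
      show "\<eta>2 > 0" using \<nu>Bpos \<epsilon> M(1) by (simp add: \<eta>2_def)
      show "\<eta>2 \<le> \<nu>B/2" unfolding \<eta>2_def by (rule min.cobounded1)
      have "\<eta>2 \<le> \<epsilon> * \<nu>B / (4 * (1 + M))" unfolding \<eta>2_def by (rule min.cobounded2)
      then have "\<eta>2 * (4 * (1 + M)) \<le> \<epsilon> * \<nu>B / (4 * (1 + M)) * (4 * (1 + M))"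
        using M(1) by (intro mult_right_mono) auto
      also have "\<dots> = \<epsilon> * \<nu>B" using M(1) by simp
      finally show "\<eta>2 * (1 + M) * 4 \<le> \<epsilon> * \<nu>B" by (simp add: algebra_simps)
    qed
    have c_lim: "(\<lambda>n. ennreal (1 / \<beta> n) * gmeasure (w n) B) \<longlonglongrightarrow> ennreal \<nu>B"
      using A1c[OF xF r(1)] emB by (simp add: B_def)
    have ev_fin: "eventually (\<lambda>n. ennreal (1 / \<beta> n) * gmeasure (w n) B < \<infinity>) sequentially"
      using order_tendstoD(2)[OF c_lim] by simp
    have d_lim: "(\<lambda>n. enn2real (ennreal (1 / \<beta> n) * gmeasure (w n) B)) \<longlonglongrightarrow> \<nu>B"
      using tendsto_enn2real[OF c_lim] \<nu>Bpos by simp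
    have ev_d: "eventually (\<lambda>n. dist (enn2real (ennreal (1 / \<beta> n) * gmeasure (w n) B)) \<nu>B < \<eta>2) sequentially"
      using tendstoD[OF d_lim \<eta>2(1)] .
    have ud: "uniform_limit {a..b+1} (\<lambda>n t. walk_prob (w n) (nat \<lfloor>\<gamma> n * t\<rfloor>) \<rho> B)
            (\<lambda>t. (LINT y : B \<inter> F | \<nu>. q t y)) sequentially"
      using A1d[OF I(1) _ xF r(1), of "b+1"] I by (simp add: B_def)
    have ev_ud: "eventually (\<lambda>n. \<forall>s\<in>{a..b+1}. dist (walk_prob (w n) (nat \<lfloor>\<gamma> n * s\<rfloor>) \<rho> B) (LINT y : B \<inter> F | \<nu>. q s y) < \<eta>2) sequentially"
      using uniform_limitD[OF ud \<eta>2(1)] .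
    have ev_o: "eventually (\<lambda>n. \<alpha>' n \<le> min (\<delta>/2) (1/2) * \<alpha> n) sequentially"
    proof -
      have "eventually (\<lambda>n. norm (\<alpha>' n) \<le> min (\<delta>/2) (1/2) * norm (\<alpha> n)) sequentially"
        using landau_o.smallD[OF \<alpha>'o, of "min (\<delta>/2) (1/2)"] \<delta> by simp
      then show ?thesis
        by (rule eventually_mono) (use \<alpha>'0 alpha_nonneg in simp)
    qed
    have ev_gam: "eventually (\<lambda>n. 2/\<delta>1 + 1 \<le> \<gamma> n) sequentially" using gamma_div by (simp add: filterlim_at_top)
    have ev_n: "eventually (\<lambda>n. n \<ge> max 1 n0) sequentially" by (rule eventually_ge_at_top)
    have ev_g: "eventually (\<lambda>n. g n x \<in> V n \<and> dist x (g n x) < r) sequentially" by (rule g_near[OF r(1)])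
    have evall: "eventually (\<lambda>n. n \<ge> max 1 n0 \<and> 1 \<le> \<alpha> n \<and> 1 \<le> \<beta> n \<and> 2/\<delta>1 + 1 \<le> \<gamma> n \<and>
        \<alpha>' n \<le> min (\<delta>/2) (1/2) * \<alpha> n \<and> (g n x \<in> V n \<and> dist x (g n x) < r) \<and>
        ennreal (1 / \<beta> n) * gmeasure (w n) B < \<infinity> \<and>
        dist (enn2real (ennreal (1 / \<beta> n) * gmeasure (w n) B)) \<nu>B < \<eta>2 \<and>
        (\<forall>s\<in>{a..b+1}. dist (walk_prob (w n) (nat \<lfloor>\<gamma> n * s\<rfloor>) \<rho> B) (LINT y : B \<inter> F | \<nu>. q s y) < \<eta>2) \<and>
        (\<forall>y z t.
        (y \<in> gball (V n) (w n) \<rho> (\<alpha> n * R) \<and> z \<in> gball (V n) (w n) \<rho> (\<alpha> n * R) \<and>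
         real (gdist (w n) y z) \<le> \<alpha> n * \<delta> \<and> t \<in> {a..b}) \<longrightarrow>
        \<beta> n * \<bar>qG (w n) (nat \<lfloor>\<gamma> n * t\<rfloor>) \<rho> y - qG (w n) (nat \<lfloor>\<gamma> n * t\<rfloor>) \<rho> z\<bar> < \<eta>)) sequentially"
      using ev_n ev_a ev_b ev_gam ev_o ev_g ev_fin ev_d ev_ud evA2 by (intro eventually_conj) (auto elim: eventually_mono)
    show ?thesis using evall
    proof (rule eventually_mono)
      fix n assume H: "n \<ge> max 1 n0 \<and> 1 \<le> \<alpha> n \<and> 1 \<le> \<beta> n \<and> 2/\<delta>1 + 1 \<le> \<gamma> n \<and>
        \<alpha>' n \<le> min (\<delta>/2) (1/2) * \<alpha> n \<and> (g n x \<in> V n \<and> dist x (g n x) < r) \<and>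
        ennreal (1 / \<beta> n) * gmeasure (w n) B < \<infinity> \<and>
        dist (enn2real (ennreal (1 / \<beta> n) * gmeasure (w n) B)) \<nu>B < \<eta>2 \<and>
        (\<forall>s\<in>{a..b+1}. dist (walk_prob (w n) (nat \<lfloor>\<gamma> n * s\<rfloor>) \<rho> B) (LINT y : B \<inter> F | \<nu>. q s y) < \<eta>2) \<and>
        (\<forall>y z t.
        (y \<in> gball (V n) (w n) \<rho> (\<alpha> n * R) \<and> z \<in> gball (V n) (w n) \<rho> (\<alpha> n * R) \<and>
         real (gdist (w n) y z) \<le> \<alpha> n * \<delta> \<and> t \<in> {a..b}) \<longrightarrow>
        \<beta> n * \<bar>qG (w n) (nat \<lfloor>\<gamma> n * t\<rfloor>) \<rho> y - qG (w n) (nat \<lfloor>\<gamma> n * t\<rfloor>) \<rho> z\<bar> < \<eta>)"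
      have n1: "n \<ge> 1" "n \<ge> n0" using H by auto
      have gr: "wgraph (V n) (w n)" using graphs n1 by blast
      have rV: "\<rho> \<in> V n" using V_root n1 by blast
      have al: "\<alpha> n \<ge> 1" and be: "\<beta> n \<ge> 1" and ga: "2/\<delta>1 + 1 \<le> \<gamma> n" using H by auto
      have ao: "\<alpha>' n \<le> min (\<delta>/2) (1/2) * \<alpha> n" using H by blast
      have gx: "g n x \<in> V n" "dist x (g n x) < r" using H by auto
      have Gfin: "ennreal (1 / \<beta> n) * gmeasure (w n) B < \<infinity>" using H by blast
      have dd: "dist (enn2real (ennreal (1 / \<beta> n) * gmeasure (w n) B)) \<nu>B < \<eta>2" using H by blast
      have UD: "\<forall>s\<in>{a..b+1}. dist (walk_prob (w n) (nat \<lfloor>\<gamma> n * s\<rfloor>) \<rho> B) (LINT y : B \<inter> F | \<nu>. q s y) < \<eta>2"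
        using H by blast
      have EQ: "\<And>y z t. y \<in> gball (V n) (w n) \<rho> (\<alpha> n * R) \<Longrightarrow> z \<in> gball (V n) (w n) \<rho> (\<alpha> n * R) \<Longrightarrow>
         real (gdist (w n) y z) \<le> \<alpha> n * \<delta> \<Longrightarrow> t \<in> {a..b} \<Longrightarrow>
        \<beta> n * \<bar>qG (w n) (nat \<lfloor>\<gamma> n * t\<rfloor>) \<rho> y - qG (w n) (nat \<lfloor>\<gamma> n * t\<rfloor>) \<rho> z\<bar> < \<eta>"
        using H by blast
      show "\<forall>t\<in>{a..b}. \<bar>\<beta> n * qG (w n) (nat \<lfloor>\<gamma> n * t\<rfloor>) \<rho> (g n x) - q t x\<bar> \<le> \<epsilon>"
      proof
        fix t assume t: "t \<in> {a..b}"
        show "\<bar>\<beta> n * qG (w n) (nat \<lfloor>\<gamma> n * t\<rfloor>) \<rho> (g n x) - q t x\<bar> \<le> \<epsilon>"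
        proof -
        define m where "m = nat \<lfloor>\<gamma> n * t\<rfloor>"
        define Qg where "Qg = \<beta> n * qG (w n) m \<rho> (g n x)"
        define c where "c = q t x"
        define G where "G = gmeasure (w n) B"
        define D where "D = enn2real G"
        define d where "d = D / \<beta> n"
        define W where "W = (walk_prob (w n) m \<rho> B + walk_prob (w n) (Suc m) \<rho> B) / 2"
        define L where "L = (\<lambda>s. LINT y : B \<inter> F | \<nu>. q s y)"
        have t0: "t > 0" "a \<le> t" "t \<le> b" using t I by auto
        have bpos: "\<beta> n > 0" using be by simp
        have gpos: "\<gamma> n > 0"
        proof -
          have "0 < 2 / \<delta>1" using \<delta>1 by simp
          then show ?thesis using ga by linarith
        qed
        have Lb: "(c - \<eta>) * \<nu>B \<le> L s \<and> L s \<le> (c + \<eta>) * \<nu>B" if s: "s \<in> {a..b+1}" "\<bar>s - t\<bar> < \<delta>1/2" for s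
        proof -
          have spos: "s > 0" using s I by auto
          have "(c - \<eta>) * measure \<nu> (B \<inter> F) \<le> (LINT y:B \<inter> F|\<nu>. q s y) \<and> (LINT y:B \<inter> F|\<nu>. q s y) \<le> (c + \<eta>) * measure \<nu> (B \<inter> F)"
          proof (rule lint_bound[OF nu_sets BF fin])
            show "continuous_on (B \<inter> F) (q s)"
              by (rule continuous_on_subset[OF qcont_slice[OF q_cont spos]]) auto
            fix y assume y: "y \<in> B \<inter> F"
            have "\<bar>q s y - q t x\<bar> < \<eta>"
            proof -
              have "y \<in> F \<inter> cball x 1" using y r(5) by (auto simp: B_def dist_commute)
              moreover have "x \<in> F \<inter> cball x 1" using xF by simp
              moreover have "t \<in> {a..b+1}" using t0 by simp
              moreover have "\<bar>s - t\<bar> + dist y x < \<delta>1" using s(2) y r(2) by (auto simp: B_def dist_commute)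
              ultimately show ?thesis using \<delta>1b s(1) by blast
            qed
            then show "c - \<eta> \<le> q s y \<and> q s y \<le> c + \<eta>" by (auto simp: c_def)
          qed
          then show ?thesis by (simp add: L_def \<nu>B_def)
        qed
        have m1: "Suc m = nat \<lfloor>\<gamma> n * (t + 1 / \<gamma> n)\<rfloor>"
        proof -
          have "\<gamma> n * (t + 1 / \<gamma> n) = \<gamma> n * t + 1" using gpos by (simp add: field_simps)
          moreover have "\<gamma> n * t \<ge> 0" using gpos t0 by simp
          ultimately show ?thesis by (simp add: m_def nat_add_distrib)
        qed
        have inv: "1 / \<gamma> n < \<delta>1 / 2" "1 / \<gamma> n \<le> 1"
        proof -
          have p2: "0 < 2 / \<delta>1" using \<delta>1 by simp
          have "2 / \<delta>1 < \<gamma> n" using ga by simp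
          then have g2: "2 < \<gamma> n * \<delta>1" using \<delta>1 by (simp add: divide_less_eq)
          then show "1 / \<gamma> n < \<delta>1 / 2" using gpos by (simp add: divide_less_eq mult.commute)
          have "\<gamma> n \<ge> 1" using ga p2 by linarith
          then show "1 / \<gamma> n \<le> 1" by simp
        qed
        have ts: "t + 1 / \<gamma> n \<in> {a..b+1}" "\<bar>(t + 1 / \<gamma> n) - t\<bar> < \<delta>1/2" proof -
          have "0 < 1 / \<gamma> n" using gpos by simp
          then have "a \<le> t + 1 / \<gamma> n \<and> t + 1 / \<gamma> n \<le> b + 1" using t0 inv(2) by linarith
          then show "t + 1 / \<gamma> n \<in> {a..b+1}" by simp
          show "\<bar>(t + 1 / \<gamma> n) - t\<bar> < \<delta>1/2" using inv(1) gpos by simp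
        qed
        have tt: "t \<in> {a..b+1}" "\<bar>t - t\<bar> < \<delta>1/2" using t0 \<delta>1 by auto
        have W_bd: "\<bar>W - c * \<nu>B\<bar> \<le> \<eta>2 + \<eta> * \<nu>B"
        proof -
          have u1: "\<bar>walk_prob (w n) m \<rho> B - L t\<bar> < \<eta>2" using UD tt(1) by (simp add: m_def L_def dist_real_def)
          have u2: "\<bar>walk_prob (w n) (Suc m) \<rho> B - L (t + 1 / \<gamma> n)\<bar> < \<eta>2"
            using UD ts(1) unfolding m1 by (simp add: L_def dist_real_def)
          have l1: "(c - \<eta>) * \<nu>B \<le> L t \<and> L t \<le> (c + \<eta>) * \<nu>B" by (rule Lb[OF tt])
          have l2: "(c - \<eta>) * \<nu>B \<le> L (t + 1 / \<gamma> n) \<and> L (t + 1 / \<gamma> n) \<le> (c + \<eta>) * \<nu>B" by (rule Lb[OF ts])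
          have e1: "(c - \<eta>) * \<nu>B = c * \<nu>B - \<eta> * \<nu>B" "(c + \<eta>) * \<nu>B = c * \<nu>B + \<eta> * \<nu>B"
            by (simp_all add: algebra_simps)
          show ?thesis unfolding W_def using avg_bound[OF u1 u2] l1 l2 unfolding e1 by blast
        qed
        obtain S where S: "finite S" "S \<subseteq> V n" "supp (w n) m \<rho> S" "supp (w n) (Suc m) \<rho> S"
          using supp2[OF gr rV] by blast
        have Wsum: "W = (\<Sum>y\<in>S\<inter>B. deg (w n) y * qG (w n) m \<rho> y)" unfolding W_def by (rule W_sum[OF gr S])
        have alpos: "\<alpha> n > 0" using al by simp
        have ao1: "\<alpha>' n \<le> \<delta>/2 * \<alpha> n" "\<alpha>' n \<le> 1/2 * \<alpha> n"
        proof -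
          have "min (\<delta>/2) (1/2) * \<alpha> n \<le> \<delta>/2 * \<alpha> n" using alpos by (intro mult_right_mono) auto
          then show "\<alpha>' n \<le> \<delta>/2 * \<alpha> n" using ao by linarith
          have "min (\<delta>/2) (1/2) * \<alpha> n \<le> 1/2 * \<alpha> n" using alpos by (intro mult_right_mono) auto
          then show "\<alpha>' n \<le> 1/2 * \<alpha> n" using ao by linarith
        qed
        have CA: "C * \<alpha> n \<ge> 0" using C1 alpos by simp
        have rR0: "\<rho> \<in> V n \<inter> ball \<rho> R0" using rV R0 by simp
        have gb: "u \<in> gball (V n) (w n) \<rho> (\<alpha> n * R)" if u: "u \<in> V n \<inter> ball \<rho> R0" for u
        proof -
          have "real (gdist (w n) \<rho> u) \<le> C * \<alpha> n * dist \<rho> u + \<alpha>' n" by (rule gdist_bd[OF n1(2) rR0 u])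
          also have "C * \<alpha> n * dist \<rho> u \<le> C * \<alpha> n * R0" using u CA by (intro mult_left_mono) auto
          then have "C * \<alpha> n * dist \<rho> u + \<alpha>' n \<le> C * \<alpha> n * R0 + 1/2 * \<alpha> n" using ao1(2) by linarith
          also have "\<dots> < \<alpha> n * R" using alpos by (simp add: R_def algebra_simps)
          finally show ?thesis using u by (simp add: gball_def)
        qed
        have inR0: "u \<in> V n \<inter> ball \<rho> R0" if "u \<in> V n" "dist x u < 1" for u
        proof -
          have "dist \<rho> u \<le> dist \<rho> x + dist x u" by (rule dist_triangle)
          then show ?thesis using that by (simp add: R0_def)
        qed
        have gR0: "g n x \<in> V n \<inter> ball \<rho> R0" using inR0[OF gx(1)] gx(2) r(5) by simp
        have Qy: "\<bar>\<beta> n * qG (w n) m \<rho> y - Qg\<bar> < \<eta>" if y: "y \<in> B" "y \<in> V n" for y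
        proof -
          have yx: "dist x y < r" using y(1) by (simp add: B_def)
          have yR0: "y \<in> V n \<inter> ball \<rho> R0" using inR0[OF y(2)] yx r(5) by simp
          have gd: "real (gdist (w n) y (g n x)) \<le> \<alpha> n * \<delta>"
          proof -
            have "dist y (g n x) \<le> dist y x + dist x (g n x)" by (rule dist_triangle)
            then have dyg: "dist y (g n x) \<le> 2 * r" using yx gx(2) by (simp add: dist_commute)
            have "real (gdist (w n) y (g n x)) \<le> C * \<alpha> n * dist y (g n x) + \<alpha>' n" by (rule gdist_bd[OF n1(2) yR0 gR0])
            also have "C * \<alpha> n * dist y (g n x) \<le> C * \<alpha> n * (2 * r)" using dyg CA by (intro mult_left_mono) auto
            then have "C * \<alpha> n * dist y (g n x) + \<alpha>' n \<le> C * \<alpha> n * (2 * r) + \<delta>/2 * \<alpha> n" using ao1(1) by linarith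
            also have "C * \<alpha> n * (2 * r) = \<alpha> n * (2 * C * r)" by (simp add: algebra_simps)
            also have "\<alpha> n * (2 * C * r) \<le> \<alpha> n * (\<delta>/2)" using Cr alpos by (intro mult_left_mono) auto
            finally show ?thesis by (simp add: algebra_simps)
          qed
          have "\<beta> n * \<bar>qG (w n) m \<rho> y - qG (w n) m \<rho> (g n x)\<bar> < \<eta>"
            using EQ[OF gb[OF yR0] gb[OF gR0] gd t] by (simp add: m_def)
          moreover have "\<bar>\<beta> n * qG (w n) m \<rho> y - Qg\<bar> = \<beta> n * \<bar>qG (w n) m \<rho> y - qG (w n) m \<rho> (g n x)\<bar>"
            using bpos by (simp add: Qg_def abs_mult right_diff_distrib[symmetric])
          ultimately show ?thesis by simp
        qed
        have Gfin': "G < \<top>"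
        proof -
          have ne: "ennreal (1 / \<beta> n) \<noteq> 0" using bpos by simp
          show ?thesis using Gfin ennreal_mult_less_top[of "ennreal (1 / \<beta> n)" G] ne unfolding G_def by (auto simp: top.not_eq_extremum)
        qed
        have dd': "\<bar>d - \<nu>B\<bar> \<le> \<eta>2"
        proof -
          have "enn2real (ennreal (1 / \<beta> n) * gmeasure (w n) B) = d"
            using bpos by (simp add: enn2real_mult d_def D_def G_def)
          then show ?thesis using dd by (simp add: dist_real_def)
        qed
        have Dnn: "D \<ge> 0" by (simp add: D_def)
        have bW: "\<beta> n * W = (\<Sum>y\<in>S\<inter>B. deg (w n) y * (\<beta> n * qG (w n) m \<rho> y))"
          by (simp add: Wsum sum_distrib_left algebra_simps)
        have SV: "y \<in> B \<and> y \<in> V n" if "y \<in> S \<inter> B" for y using that S(2) by blast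
        have lo0: "(\<Sum>y\<in>S\<inter>B. deg (w n) y * (Qg - \<eta>)) \<le> \<beta> n * W"
          unfolding bW
        proof (rule sum_mono)
          fix y assume "y \<in> S \<inter> B"
          then have "Qg - \<eta> \<le> \<beta> n * qG (w n) m \<rho> y" using Qy SV by fastforce
          then show "deg (w n) y * (Qg - \<eta>) \<le> deg (w n) y * (\<beta> n * qG (w n) m \<rho> y)"
            using deg_nonneg[OF gr] by (intro mult_left_mono) auto
        qed
        have hi0: "\<beta> n * W \<le> (\<Sum>y\<in>S\<inter>B. deg (w n) y * (Qg + \<eta>))"
          unfolding bW
        proof (rule sum_mono)
          fix y assume "y \<in> S \<inter> B"
          then have "\<beta> n * qG (w n) m \<rho> y \<le> Qg + \<eta>" using Qy SV by fastforce
          then show "deg (w n) y * (\<beta> n * qG (w n) m \<rho> y) \<le> deg (w n) y * (Qg + \<eta>)"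
            using deg_nonneg[OF gr] by (intro mult_left_mono) auto
        qed
        have sd: "(\<Sum>y\<in>S\<inter>B. deg (w n) y * k) = k * (\<Sum>y\<in>S\<inter>B. deg (w n) y)" for k
          by (simp add: sum_distrib_left mult_ac)
        have Snn: "(\<Sum>y\<in>S\<inter>B. deg (w n) y) \<ge> 0" using deg_nonneg[OF gr] by (simp add: sum_nonneg)
        have bnd: "(Qg - \<eta>) * D \<le> \<beta> n * W \<and> \<beta> n * W \<le> (Qg + \<eta>) * D"
        proof (cases "B \<inter> V n \<subseteq> S")
          case True
          have "G = ennreal (\<Sum>y\<in>S\<inter>B. deg (w n) y)" using gmeasure_eq[OF gr S(1) True] by (simp add: G_def)
          then have "D = (\<Sum>y\<in>S\<inter>B. deg (w n) y)" using Snn by (simp add: D_def)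
          then show ?thesis using lo0 hi0 sd by simp
        next
          case False
          then obtain y0 where y0: "y0 \<in> B" "y0 \<in> V n" "y0 \<notin> S" by blast
          have "qG (w n) m \<rho> y0 = 0" by (rule qG_zero[OF S(3) S(4) y0(3)])
          then have Qs: "\<bar>Qg\<bar> < \<eta>" using Qy[OF y0(1,2)] by simp
          have sD: "(\<Sum>y\<in>S\<inter>B. deg (w n) y) \<le> D"
          proof -
            have "ennreal (\<Sum>y\<in>S\<inter>B. deg (w n) y) \<le> G" using gmeasure_ge[OF gr S(1)] by (simp add: G_def)
            then have "enn2real (ennreal (\<Sum>y\<in>S\<inter>B. deg (w n) y)) \<le> enn2real G" using Gfin' by (rule enn2real_mono)
            then show ?thesis using Snn by (simp add: D_def)
          qed
          have "(Qg - \<eta>) * D \<le> (Qg - \<eta>) * (\<Sum>y\<in>S\<inter>B. deg (w n) y)"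
            using Qs sD by (intro mult_left_mono_neg) auto
          moreover have "(Qg + \<eta>) * (\<Sum>y\<in>S\<inter>B. deg (w n) y) \<le> (Qg + \<eta>) * D"
            using Qs sD by (intro mult_left_mono) auto
          ultimately show ?thesis using lo0 hi0 sd[of "Qg - \<eta>"] sd[of "Qg + \<eta>"] by linarith
        qed
        have Mc: "\<bar>c\<bar> \<le> M" using M(2) t by (simp add: c_def)
        have "\<bar>Qg - c\<bar> \<le> \<epsilon>"
        proof (rule final_arith[OF bpos Dnn d_def])
          show "(Qg - \<eta>) * D \<le> \<beta> n * W" "\<beta> n * W \<le> (Qg + \<eta>) * D" using bnd by auto
          show "\<bar>W - c * \<nu>B\<bar> \<le> \<eta>2 + \<eta> * \<nu>B" by (rule W_bd)
          show "\<bar>d - \<nu>B\<bar> \<le> \<eta>2" by (rule dd')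
          show "\<eta>2 \<le> \<nu>B / 2" "0 < \<nu>B" "\<bar>c\<bar> \<le> M" "\<eta>2 * (1 + M) * 4 \<le> \<epsilon> * \<nu>B" "12 * \<eta> \<le> \<epsilon>" "0 < \<eta>" "0 \<le> \<eta>2"
            using \<eta>2 \<nu>Bpos Mc \<eta> by (auto simp: \<eta>_def)
        qed
        then show ?thesis by (simp add: Qg_def c_def m_def)
        qed
      qed
    qed
  qed
  show "(\<lambda>n. SUP t \<in> {a..b}. \<bar>\<beta> n * qG (w n) (nat \<lfloor>\<gamma> n * t\<rfloor>) \<rho> (g n x) - q t x\<bar>) \<longlonglongrightarrow> 0"
  proof (rule tendstoI)
    fix \<epsilon> :: real assume e: "\<epsilon> > 0"
    show "eventually (\<lambda>n. dist (SUP t \<in> {a..b}. \<bar>\<beta> n * qG (w n) (nat \<lfloor>\<gamma> n * t\<rfloor>) \<rho> (g n x) - q t x\<bar>) 0 < \<epsilon>) sequentially"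
    proof (rule eventually_mono[rotated])
      show "eventually (\<lambda>n. \<forall>t\<in>{a..b}. \<bar>\<beta> n * qG (w n) (nat \<lfloor>\<gamma> n * t\<rfloor>) \<rho> (g n x) - q t x\<bar> \<le> \<epsilon> / 2) sequentially"
        using core[of "\<epsilon> / 2"] e by simp
      fix n assume h: "\<forall>t\<in>{a..b}. \<bar>\<beta> n * qG (w n) (nat \<lfloor>\<gamma> n * t\<rfloor>) \<rho> (g n x) - q t x\<bar> \<le> \<epsilon> / 2"
      have ne: "{a..b} \<noteq> {}" using I by simp
      have bdd: "bdd_above ((\<lambda>t. \<bar>\<beta> n * qG (w n) (nat \<lfloor>\<gamma> n * t\<rfloor>) \<rho> (g n x) - q t x\<bar>) ` {a..b})"
        using h by (intro bdd_aboveI2) blast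
      have "(SUP t \<in> {a..b}. \<bar>\<beta> n * qG (w n) (nat \<lfloor>\<gamma> n * t\<rfloor>) \<rho> (g n x) - q t x\<bar>) \<le> \<epsilon> / 2"
        using h by (intro cSUP_least[OF ne]) blast
      moreover have "0 \<le> (SUP t \<in> {a..b}. \<bar>\<beta> n * qG (w n) (nat \<lfloor>\<gamma> n * t\<rfloor>) \<rho> (g n x) - q t x\<bar>)"
        using I by (intro cSUP_upper2[OF bdd, of a]) auto
      ultimately show "dist (SUP t \<in> {a..b}. \<bar>\<beta> n * qG (w n) (nat \<lfloor>\<gamma> n * t\<rfloor>) \<rho> (g n x) - q t x\<bar>) 0 < \<epsilon>"
        using e by (simp add: dist_real_def)
    qed
  qed
qed


end
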